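(* Let $p\ge3$ and let $H$ be a graph with vertex set $A\cup B\cup\{v\}$ such that $A$, $B$, $\{v\}$ are pairwise disjoint; $A$ and $B$ are independent sets complete to each other; $|A|\ge p$ and $|B|\ge p$; $v$ has at least two neighbours in $A\cup B$; and $v$ has a neighbour and a non-neighbour in at least one of the sets $A$, $B$. Then $H\xrightarrow{\cap} X_p$ or $H\xrightarrow{\cap} Y_p$. In particular, if $p\ge 3t^2+t+1$ for some $t\in\mathbb{N}$, then $H\xrightarrow{\cap} tS_{t,t,t}$.
   Context: All graphs are finite and simple. For graphs $G_1=(V_1,E_1)$, $G_2=(V_2,E_2)$, $G_1\cap G_2=(V_1\cap V_2, E_1\cap E_2)$. For a graph $G=(V,E)$ and an injective map $\alpha$ on $V$, $G^{\alpha}$ has vertex set $\alpha(V)$ and edge set $\{\{\alpha(v),\alpha(w)\}: \{v,w\}\in E\}$. We write $G\xrightarrow{\cap} H$ if $H$ is (isomorphic to) $G^{\alpha_1}\cap\cdots\cap G^{\alpha_k}$ for some $k\ge1$ and injective maps $\alpha_1,\dots,\alpha_k$ on $V(G)$. For integers $a,b,c\ge1$, $S_{a,b,c}$ is the tree consisting of a vertex of degree $3$ together with three pendant paths having $a$, $b$, $c$ edges respectively; $tS_{t,t,t}$ is the disjoint union of $t$ copies of $S_{t,t,t}$. $X_p$ is the graph obtained from $K_{p,p}$ by adding a new vertex adjacent to exactly two vertices, both in the same part; $Y_p$ is obtained from $K_{p,p}$ by adding a new vertex adjacent to exactly two vertices, one in each part. *)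

theory Defs
  imports Main
begin

type_synonym 'a graph = "'a set \<times> 'a set set"

definition simple_graph :: "'a graph \<Rightarrow> bool" where
  "simple_graph G \<longleftrightarrow> finite (fst G) \<and>
     (\<forall>e\<in>snd G. \<exists>x y. x \<in> fst G \<and> y \<in> fst G \<and> x \<noteq> y \<and> e = {x, y})"

definition graph_iso :: "'a graph \<Rightarrow> 'b graph \<Rightarrow> bool" where
  "graph_iso G H \<longleftrightarrow> (\<exists>f. bij_betw f (fst G) (fst H) \<and>
     (\<forall>x\<in>fst G. \<forall>y\<in>fst G. {x, y} \<in> snd G \<longleftrightarrow> {f x, f y} \<in> snd H))"

definition graph_image :: "('a \<Rightarrow> 'b) \<Rightarrow> 'a graph \<Rightarrow> 'b graph" where
  "graph_image \<alpha> G = (\<alpha> ` fst G, (\<lambda>e. \<alpha> ` e) ` snd G)"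

text \<open>The maps take values in nat; for finite graphs this loses no generality (any finitely many
  injective maps into a common set can be renamed into nat).\<close>
definition intersects_to :: "'a graph \<Rightarrow> 'b graph \<Rightarrow> bool" where
  "intersects_to G H \<longleftrightarrow> (\<exists>k::nat. \<exists>\<alpha> :: nat \<Rightarrow> 'a \<Rightarrow> nat. k \<ge> 1 \<and>
     (\<forall>i<k. inj_on (\<alpha> i) (fst G)) \<and>
     graph_iso ((\<Inter>i<k. fst (graph_image (\<alpha> i) G)), (\<Inter>i<k. snd (graph_image (\<alpha> i) G))) H)"

text \<open>X_p: K_{p,p} with parts {0..<p}, {p..<2p}; new vertex 2p adjacent to 0 and 1 (same part).\<close>
definition Kpp_edges :: "nat \<Rightarrow> nat set set" where
  "Kpp_edges p = {{a, b} | a b. a < p \<and> p \<le> b \<and> b < 2 * p}"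

definition X_graph :: "nat \<Rightarrow> nat graph" where
  "X_graph p = ({0..2 * p}, Kpp_edges p \<union> {{2 * p, 0}, {2 * p, 1}})"

text \<open>Y_p: new vertex 2p adjacent to 0 and p (one in each part).\<close>
definition Y_graph :: "nat \<Rightarrow> nat graph" where
  "Y_graph p = ({0..2 * p}, Kpp_edges p \<union> {{2 * p, 0}, {2 * p, p}})"

text \<open>t S_{t,t,t}: copies i < t; centre (i,0,0); leg j in {1,2,3} has vertices (i,j,k), 1 <= k <= t,
  path centre - (i,j,1) - ... - (i,j,t).\<close>
definition tS_graph :: "nat \<Rightarrow> (nat \<times> nat \<times> nat) graph" where
  "tS_graph t =
    ({(i, 0, 0) | i. i < t} \<union> {(i, j, k) | i j k. i < t \<and> 1 \<le> j \<and> j \<le> 3 \<and> 1 \<le> k \<and> k \<le> t},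
     {{(i, 0, 0), (i, j, 1)} | i j. i < t \<and> 1 \<le> j \<and> j \<le> 3} \<union>
     {{(i, j, k), (i, j, Suc k)} | i j k. i < t \<and> 1 \<le> j \<and> j \<le> 3 \<and> 1 \<le> k \<and> k < t})"

end

theory Submission
  imports Defs "HOL-Library.Nat_Bijection"
begin
definition emb :: "'a set \<Rightarrow> 'a set set \<Rightarrow> 'b set \<Rightarrow> 'b set set \<Rightarrow> ('b \<Rightarrow> 'a) \<Rightarrow> bool" where
  "emb V E W F \<phi> \<longleftrightarrow> inj_on \<phi> W \<and> \<phi> ` W \<subseteq> V \<and> (\<forall>f\<in>F. \<phi> ` f \<in> E)"

lemma M1:
  fixes V :: "'a set" and E :: "'a set set" and W :: "'b set" and F :: "'b set set"
  assumes finV: "finite V"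
    and simp: "\<forall>e\<in>E. \<exists>x y. x\<in>V \<and> y\<in>V \<and> x\<noteq>y \<and> e={x,y}"
    and finW: "finite W" and FW: "\<forall>f\<in>F. f \<subseteq> W"
    and ex0: "\<exists>\<phi>. emb V E W F \<phi>"
    and kill: "\<And>x y. x\<in>W \<Longrightarrow> y\<in>W \<Longrightarrow> x\<noteq>y \<Longrightarrow> {x,y}\<notin>F \<Longrightarrow> \<exists>\<phi>. emb V E W F \<phi> \<and> {\<phi> x, \<phi> y} \<notin> E"
  shows "intersects_to (V,E) (W,F)"
proof -
  define P where "P = {(x,y). x\<in>W \<and> y\<in>W \<and> x\<noteq>y \<and> {x,y}\<notin>F}"
  have finP: "finite P" unfolding P_def
    by (rule finite_subset[of _ "W \<times> W"]) (use finW in auto)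
  obtain g where g: "bij_betw g {0..<card P} P" using ex_bij_betw_nat_finite[OF finP] by blast
  define m where "m = card P"
  define \<Phi> where "\<Phi> i = (if i < m then (SOME \<phi>. emb V E W F \<phi> \<and> {\<phi> (fst (g i)), \<phi> (snd (g i))} \<notin> E)
      else (SOME \<phi>. emb V E W F \<phi>))" for i
  have Phi_emb: "emb V E W F (\<Phi> i)" for i
  proof (cases "i < m")
    case True
    then have "g i \<in> P" using g m_def bij_betwE by fastforce
    then have "\<exists>\<phi>. emb V E W F \<phi> \<and> {\<phi> (fst (g i)), \<phi> (snd (g i))} \<notin> E"
      using kill unfolding P_def by auto
    from someI_ex[OF this] show ?thesis using True unfolding \<Phi>_def by simp
  next
    case False
    from someI_ex[OF ex0] show ?thesis using False unfolding \<Phi>_def by simp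
  qed
  have Phi_kill: "i < m \<Longrightarrow> {\<Phi> i (fst (g i)), \<Phi> i (snd (g i))} \<notin> E" for i
  proof -
    assume "i < m"
    then have "g i \<in> P" using g m_def bij_betwE by fastforce
    then have "\<exists>\<phi>. emb V E W F \<phi> \<and> {\<phi> (fst (g i)), \<phi> (snd (g i))} \<notin> E"
      using kill unfolding P_def by auto
    from someI_ex[OF this] show ?thesis using \<open>i < m\<close> unfolding \<Phi>_def by simp
  qed
  have injPhi: "inj_on (\<Phi> i) W" and PhiV: "\<Phi> i ` W \<subseteq> V" and PhiE: "\<And>f. f\<in>F \<Longrightarrow> \<Phi> i ` f \<in> E" for i
    using Phi_emb[of i] unfolding emb_def by auto
  obtain c :: "'b \<Rightarrow> nat" where c: "inj_on c W" using finite_imp_inj_to_nat_seg[OF finW] by blast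
  obtain d :: "'a \<Rightarrow> nat" where d: "inj_on d V" using finite_imp_inj_to_nat_seg[OF finV] by blast
  define c2 where "c2 w = 2 * c w" for w
  have c2: "inj_on c2 W" using c unfolding c2_def inj_on_def by auto
  define \<alpha> where "\<alpha> i u = (if u \<in> \<Phi> i ` W then c2 (the_inv_into W (\<Phi> i) u) else 2 * prod_encode (i, d u) + 1)" for i u
  have \<alpha>_in: "w \<in> W \<Longrightarrow> \<alpha> i (\<Phi> i w) = c2 w" for i w
    unfolding \<alpha>_def using the_inv_into_f_f[OF injPhi] by auto
  have even_iff: "even (\<alpha> i u) \<longleftrightarrow> u \<in> \<Phi> i ` W" for i u
    unfolding \<alpha>_def c2_def by auto
  have inj\<alpha>: "inj_on (\<alpha> i) V" for i
  proof (rule inj_onI)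
    fix a b assume a: "a \<in> V" and b: "b \<in> V" and eq: "\<alpha> i a = \<alpha> i b"
    show "a = b"
    proof (cases "a \<in> \<Phi> i ` W")
      case True
      then have "b \<in> \<Phi> i ` W" using even_iff eq by metis
      then obtain wa wb where "wa \<in> W" "wb \<in> W" "a = \<Phi> i wa" "b = \<Phi> i wb" using True by auto
      then show ?thesis using eq \<alpha>_in c2 by (metis inj_onD)
    next
      case False
      then have "b \<notin> \<Phi> i ` W" using even_iff eq by metis
      then have "prod_encode (i, d a) = prod_encode (i, d b)" using eq False unfolding \<alpha>_def by auto
      then have "d a = d b" using inj_prod_encode[of UNIV] by (auto dest: inj_onD)
      then show ?thesis using d a b by (auto dest: inj_onD)
    qed
  qed
  define k where "k = m + 2"
  define W' where "W' = c2 ` W"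
  have vert: "(\<Inter>i<k. fst (graph_image (\<alpha> i) (V,E))) = W'"
  proof
    show "W' \<subseteq> (\<Inter>i<k. fst (graph_image (\<alpha> i) (V,E)))"
    proof
      fix z assume "z \<in> W'"
      then obtain w where w: "w \<in> W" "z = c2 w" unfolding W'_def by auto
      have "z \<in> \<alpha> i ` V" for i using \<alpha>_in[OF w(1), of i] PhiV[of i] w by (metis image_eqI image_subset_iff)
      then show "z \<in> (\<Inter>i<k. fst (graph_image (\<alpha> i) (V,E)))" unfolding graph_image_def by auto
    qed
  next
    show "(\<Inter>i<k. fst (graph_image (\<alpha> i) (V,E))) \<subseteq> W'"
    proof
      fix z assume z: "z \<in> (\<Inter>i<k. fst (graph_image (\<alpha> i) (V,E)))"
      have "z \<in> \<alpha> m ` V" "z \<in> \<alpha> (Suc m) ` V" using z unfolding k_def graph_image_def by auto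
      then obtain a b where ab: "a \<in> V" "z = \<alpha> m a" "b \<in> V" "z = \<alpha> (Suc m) b" by auto
      show "z \<in> W'"
      proof (cases "a \<in> \<Phi> m ` W")
        case True
        then obtain w where "w \<in> W" "a = \<Phi> m w" by auto
        then show ?thesis using ab \<alpha>_in unfolding W'_def by auto
      next
        case False
        then have "b \<notin> \<Phi> (Suc m) ` W" using even_iff ab by metis
        then have "prod_encode (m, d a) = prod_encode (Suc m, d b)" using ab False unfolding \<alpha>_def by auto
        then have "(m, d a) = (Suc m, d b)" using inj_prod_encode[of UNIV] by (auto dest: inj_onD)
        then show ?thesis by simp
      qed
    qed
  qed
  define F' where "F' = (\<lambda>f. c2 ` f) ` F"
  have edge: "(\<Inter>i<k. snd (graph_image (\<alpha> i) (V,E))) = F'"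
  proof
    show "F' \<subseteq> (\<Inter>i<k. snd (graph_image (\<alpha> i) (V,E)))"
    proof
      fix \<epsilon> assume "\<epsilon> \<in> F'"
      then obtain f where f: "f \<in> F" "\<epsilon> = c2 ` f" unfolding F'_def by auto
      have "\<epsilon> \<in> (\<lambda>e. \<alpha> i ` e) ` E" for i
      proof -
        have "\<alpha> i ` (\<Phi> i ` f) = c2 ` f" using \<alpha>_in FW f(1) by (auto simp: image_image subset_iff)
        then show ?thesis using PhiE[OF f(1), of i] f(2) by (metis image_eqI)
      qed
      then show "\<epsilon> \<in> (\<Inter>i<k. snd (graph_image (\<alpha> i) (V,E)))" unfolding graph_image_def by auto
    qed
  next
    show "(\<Inter>i<k. snd (graph_image (\<alpha> i) (V,E))) \<subseteq> F'"
    proof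
      fix \<epsilon> assume \<epsilon>: "\<epsilon> \<in> (\<Inter>i<k. snd (graph_image (\<alpha> i) (V,E)))"
      have \<epsilon>i: "i < k \<Longrightarrow> \<exists>e\<in>E. \<epsilon> = \<alpha> i ` e" for i
      proof -
        assume "i < k"
        then have "\<epsilon> \<in> (\<lambda>e. \<alpha> i ` e) ` E" using \<epsilon> unfolding graph_image_def by auto
        then show ?thesis by blast
      qed
      have sub: "\<epsilon> \<subseteq> W'"
      proof -
        have "\<epsilon> \<subseteq> fst (graph_image (\<alpha> i) (V,E))" if ik: "i < k" for i
        proof -
          obtain e where "e \<in> E" "\<epsilon> = \<alpha> i ` e" using \<epsilon>i[OF ik] by blast
          then show ?thesis using simp unfolding graph_image_def by fastforce
        qed
        then show ?thesis using vert by blast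
      qed
      obtain e0 where e0: "e0 \<in> E" "\<epsilon> = \<alpha> 0 ` e0" using \<epsilon>i[of 0] k_def by auto
      obtain a b where ab: "a \<in> V" "b \<in> V" "a \<noteq> b" "e0 = {a,b}" using simp e0 by blast
      have "\<alpha> 0 a \<in> W'" "\<alpha> 0 b \<in> W'" using sub e0 ab by auto
      then obtain w1 w2 where w: "w1 \<in> W" "w2 \<in> W" "\<alpha> 0 a = c2 w1" "\<alpha> 0 b = c2 w2" unfolding W'_def by auto
      have "w1 \<noteq> w2" using w inj\<alpha>[of 0] ab by (metis inj_onD)
      have \<epsilon>eq: "\<epsilon> = c2 ` {w1, w2}" using e0 ab w by auto
      show "\<epsilon> \<in> F'"
      proof (cases "{w1,w2} \<in> F")
        case True then show ?thesis using \<epsilon>eq unfolding F'_def by (intro image_eqI[of _ _ "{w1,w2}"]) auto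
      next
        case False
        then have "(w1,w2) \<in> P" using w \<open>w1 \<noteq> w2\<close> unfolding P_def by auto
        then obtain j where j: "j < m" "g j = (w1,w2)" using g m_def by (metis atLeastLessThan_iff bij_betw_iff_bijections)
        obtain e where e: "e \<in> E" "\<epsilon> = \<alpha> j ` e" using \<epsilon>i[of j] j k_def by auto
        obtain a' b' where ab': "a' \<in> V" "b' \<in> V" "e = {a',b'}" using simp e by blast
        have "\<alpha> j a' \<in> \<epsilon>" "\<alpha> j b' \<in> \<epsilon>" using e ab' by auto
        then have ev: "even (\<alpha> j a')" "even (\<alpha> j b')" using sub unfolding W'_def c2_def by auto
        then obtain w1' w2' where w': "w1' \<in> W" "w2' \<in> W" "a' = \<Phi> j w1'" "b' = \<Phi> j w2'"
          using even_iff by blast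
        have "c2 ` {w1', w2'} = c2 ` {w1, w2}" using e ab' w' \<alpha>_in \<epsilon>eq by auto
        then have "{w1', w2'} = {w1, w2}"
          by (rule iffD1[OF inj_on_image_eq_iff[OF c2], rotated 2]) (use w w' in auto)
        then have "e = {\<Phi> j w1, \<Phi> j w2}" using ab' w' by auto
        then show ?thesis using Phi_kill[OF j(1)] j(2) e(1) by simp
      qed
    qed
  qed
  have bij: "bij_betw c2 W W'" using c2 unfolding W'_def bij_betw_def by auto
  have iso: "graph_iso (W', F') (W, F)"
    unfolding graph_iso_def
  proof (intro exI[of _ "the_inv_into W c2"] conjI ballI)
    show "bij_betw (the_inv_into W c2) (fst (W', F')) (fst (W, F))" using bij_betw_the_inv_into[OF bij] by simp
  next
    fix x y assume "x \<in> fst (W', F')" "y \<in> fst (W', F')"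
    then obtain wx wy where wxy: "wx \<in> W" "wy \<in> W" "x = c2 wx" "y = c2 wy" unfolding W'_def by auto
    have inv: "the_inv_into W c2 x = wx" "the_inv_into W c2 y = wy" using the_inv_into_f_f[OF c2] wxy by auto
    have "{x,y} \<in> F' \<longleftrightarrow> {wx,wy} \<in> F"
    proof
      assume "{x,y} \<in> F'"
      then obtain f where f: "f \<in> F" "{x,y} = c2 ` f" unfolding F'_def by auto
      then have "c2 ` f = c2 ` {wx,wy}" using wxy by auto
      then have "f = {wx,wy}"
        by (rule iffD1[OF inj_on_image_eq_iff[OF c2], rotated 2]) (use FW f wxy in auto)
      then show "{wx,wy} \<in> F" using f by simp
    next
      assume "{wx,wy} \<in> F" then show "{x,y} \<in> F'" unfolding F'_def using wxy by (intro image_eqI[of _ _ "{wx,wy}"]) auto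
    qed
    then show "({x, y} \<in> snd (W', F')) = ({the_inv_into W c2 x, the_inv_into W c2 y} \<in> snd (W, F))"
      using inv by simp
  qed
  show ?thesis unfolding intersects_to_def
    apply (rule exI[of _ k], rule exI[of _ \<alpha>])
    using inj\<alpha> vert edge iso k_def by auto
qed

lemma inj_extend:
  assumes "finite T" "finite S" "card T \<le> card S" "D \<subseteq> T" "inj_on f D" "f ` D \<subseteq> S"
  shows "\<exists>g. inj_on g T \<and> g ` T \<subseteq> S \<and> (\<forall>x\<in>D. g x = f x)"
proof -
  have fD: "finite D" using assms finite_subset by blast
  have "card (T - D) = card T - card D" using assms fD by (simp add: card_Diff_subset)
  moreover have "card (S - f ` D) = card S - card D"
    using assms fD by (simp add: card_Diff_subset card_image)
  ultimately have "card (T - D) \<le> card (S - f ` D)" using assms by simp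
  then obtain h where h: "h ` (T - D) \<subseteq> S - f ` D" "inj_on h (T - D)"
    using card_le_inj[of "T - D" "S - f ` D"] assms by auto
  define g where "g x = (if x \<in> D then f x else h x)" for x
  have "inj_on g T"
  proof (rule inj_onI)
    fix a b assume a: "a \<in> T" and b: "b \<in> T" and eq: "g a = g b"
    show "a = b"
    proof (cases "a \<in> D"; cases "b \<in> D")
      assume "a \<in> D" "b \<in> D" then show ?thesis using eq assms(5) unfolding g_def by (auto dest: inj_onD)
    next
      assume "a \<in> D" "b \<notin> D" then show ?thesis using eq h a b unfolding g_def by force
    next
      assume "a \<notin> D" "b \<in> D" then show ?thesis using eq h a b unfolding g_def by force
    next
      assume "a \<notin> D" "b \<notin> D" then show ?thesis using eq h a b unfolding g_def by (auto dest: inj_onD)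
    qed
  qed
  moreover have "g ` T \<subseteq> S" using h assms unfolding g_def by auto
  moreover have "\<forall>x\<in>D. g x = f x" unfolding g_def by auto
  ultimately show ?thesis by blast
qed

lemma GE:
  fixes S1 S2 :: "'a set" and W :: "'b set" and \<sigma> :: "'b \<Rightarrow> bool"
  assumes "finite S1" "finite S2" "S1 \<inter> S2 = {}" "v \<notin> S1" "v \<notin> S2" "finite W"
    and c1: "card {w\<in>W. w \<noteq> x0 \<and> \<sigma> w} \<le> card S1"
    and c2: "card {w\<in>W. w \<noteq> x0 \<and> \<not> \<sigma> w} \<le> card S2"
    and D: "D \<subseteq> W" "x0 \<notin> D" "inj_on f D"
    and Df: "\<forall>w\<in>D. (\<sigma> w \<longrightarrow> f w \<in> S1) \<and> (\<not> \<sigma> w \<longrightarrow> f w \<in> S2)"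
  shows "\<exists>\<phi>. inj_on \<phi> W \<and> \<phi> x0 = v \<and> (\<forall>w\<in>W. w \<noteq> x0 \<longrightarrow> (\<sigma> w \<longrightarrow> \<phi> w \<in> S1) \<and> (\<not> \<sigma> w \<longrightarrow> \<phi> w \<in> S2))
     \<and> (\<forall>w\<in>D. \<phi> w = f w)"
proof -
  define T1 where "T1 = {w\<in>W. w \<noteq> x0 \<and> \<sigma> w}"
  define T2 where "T2 = {w\<in>W. w \<noteq> x0 \<and> \<not> \<sigma> w}"
  have D1: "{w\<in>D. \<sigma> w} \<subseteq> T1" using D unfolding T1_def by auto
  have D2: "{w\<in>D. \<not> \<sigma> w} \<subseteq> T2" using D unfolding T2_def by auto
  obtain g1 where g1: "inj_on g1 T1" "g1 ` T1 \<subseteq> S1" "\<forall>x\<in>{w\<in>D. \<sigma> w}. g1 x = f x"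
  proof -
    have "inj_on f {w\<in>D. \<sigma> w}" using D(3) by (rule inj_on_subset) auto
    moreover have "f ` {w\<in>D. \<sigma> w} \<subseteq> S1" using Df by auto
    moreover have "finite T1" using assms(6) unfolding T1_def by auto
    moreover have "card T1 \<le> card S1" using c1 unfolding T1_def by simp
    ultimately have "\<exists>g. inj_on g T1 \<and> g ` T1 \<subseteq> S1 \<and> (\<forall>x\<in>{w\<in>D. \<sigma> w}. g x = f x)"
      using inj_extend[of T1 S1 "{w\<in>D. \<sigma> w}" f] assms D1 by blast
    then show ?thesis using that by blast
  qed
  obtain g2 where g2: "inj_on g2 T2" "g2 ` T2 \<subseteq> S2" "\<forall>x\<in>{w\<in>D. \<not> \<sigma> w}. g2 x = f x"
  proof -
    have "inj_on f {w\<in>D. \<not> \<sigma> w}" using D(3) by (rule inj_on_subset) auto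
    moreover have "f ` {w\<in>D. \<not> \<sigma> w} \<subseteq> S2" using Df by auto
    moreover have "finite T2" using assms(6) unfolding T2_def by auto
    moreover have "card T2 \<le> card S2" using c2 unfolding T2_def by simp
    ultimately have "\<exists>g. inj_on g T2 \<and> g ` T2 \<subseteq> S2 \<and> (\<forall>x\<in>{w\<in>D. \<not> \<sigma> w}. g x = f x)"
      using inj_extend[of T2 S2 "{w\<in>D. \<not> \<sigma> w}" f] assms D2 by blast
    then show ?thesis using that by blast
  qed
  define \<phi> where "\<phi> w = (if w = x0 then v else if \<sigma> w then g1 w else g2 w)" for w
  have m1: "w \<in> W \<Longrightarrow> w \<noteq> x0 \<Longrightarrow> \<sigma> w \<Longrightarrow> \<phi> w \<in> S1" for w using g1 unfolding \<phi>_def T1_def by auto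
  have m2: "w \<in> W \<Longrightarrow> w \<noteq> x0 \<Longrightarrow> \<not> \<sigma> w \<Longrightarrow> \<phi> w \<in> S2" for w using g2 unfolding \<phi>_def T2_def by auto
  have "inj_on \<phi> W"
  proof (rule inj_onI)
    fix a b assume a: "a \<in> W" and b: "b \<in> W" and eq: "\<phi> a = \<phi> b"
    show "a = b"
    proof (cases "a = x0 \<or> b = x0")
      case True
      then show ?thesis using m1 m2 a b eq assms(4,5) unfolding \<phi>_def by (metis (full_types))
    next
      case False
      then have ne: "a \<noteq> x0" "b \<noteq> x0" by auto
      show ?thesis
      proof (cases "\<sigma> a"; cases "\<sigma> b")
        assume "\<sigma> a" "\<sigma> b" then show ?thesis using g1 a b ne eq unfolding \<phi>_def T1_def by (auto dest: inj_onD)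
      next
        assume "\<sigma> a" "\<not> \<sigma> b" then show ?thesis using m1[OF a ne(1)] m2[OF b ne(2)] eq assms(3) by auto
      next
        assume "\<not> \<sigma> a" "\<sigma> b" then show ?thesis using m2[OF a ne(1)] m1[OF b ne(2)] eq assms(3) by auto
      next
        assume "\<not> \<sigma> a" "\<not> \<sigma> b" then show ?thesis using g2 a b ne eq unfolding \<phi>_def T2_def by (auto dest: inj_onD)
      qed
    qed
  qed
  moreover have "\<forall>w\<in>D. \<phi> w = f w" using g1 g2 D unfolding \<phi>_def by auto
  ultimately show ?thesis using m1 m2 unfolding \<phi>_def by auto
qed

lemma Kpp_iff: "{a,b} \<in> Kpp_edges p \<longleftrightarrow> (a<p \<and> p\<le>b \<and> b<2*p) \<or> (b<p \<and> p\<le>a \<and> a<2*p)"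
  unfolding Kpp_edges_def by (auto simp: doubleton_eq_iff)

lemma Kpp_form: "e \<in> Kpp_edges p \<Longrightarrow> \<exists>a b. e = {a,b} \<and> a<p \<and> p\<le>b \<and> b<2*p"
  unfolding Kpp_edges_def by auto

locale HG =
  fixes V :: "'a set" and E :: "'a set set" and S S' :: "'a set" and v :: 'a and p :: nat
    and u0 u1 u2 :: 'a
  assumes finV: "finite V"
    and simpE: "\<forall>e\<in>E. \<exists>x y. x\<in>V \<and> y\<in>V \<and> x\<noteq>y \<and> e={x,y}"
    and Vdef: "V = S \<union> S' \<union> {v}"
    and disj: "S \<inter> S' = {}" and vS: "v \<notin> S" and vS': "v \<notin> S'"
    and indS: "\<forall>x\<in>S. \<forall>y\<in>S. {x,y} \<notin> E"
    and indS': "\<forall>x\<in>S'. \<forall>y\<in>S'. {x,y} \<notin> E"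
    and compl: "\<forall>x\<in>S. \<forall>y\<in>S'. {x,y} \<in> E"
    and cS: "p \<le> card S" and cS': "p \<le> card S'"
    and p3: "3 \<le> p"
    and u1: "u1 \<in> S" "{v,u1} \<in> E"
    and u0: "u0 \<in> S" "{v,u0} \<notin> E"
    and u2: "{v,u2} \<in> E" "u2 \<noteq> u1"
begin

lemma finS: "finite S" and finS': "finite S'" using finV Vdef by auto

lemma compl2: "x \<in> S' \<Longrightarrow> y \<in> S \<Longrightarrow> {x,y} \<in> E"
  using compl by (metis insert_commute)

lemma u2SS: "u2 \<in> S \<union> S'"
proof -
  obtain x y where "x \<in> V" "y \<in> V" "x \<noteq> y" "{v,u2} = {x,y}" using simpE u2(1) by blast
  then have "u2 \<in> V" "u2 \<noteq> v" by (metis doubleton_eq_iff)+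
  then show ?thesis using Vdef by auto
qed

lemma u_distinct: "u0 \<noteq> u1" "u0 \<noteq> u2" "u1 \<noteq> u2"
  using u0 u1 u2 by auto

lemma embG:
  fixes W :: "'b set" and F :: "'b set set" and \<sigma> :: "'b \<Rightarrow> bool"
  assumes finW: "finite W"
    and c1: "card {w\<in>W. w \<noteq> x0 \<and> \<sigma> w} \<le> card S"
    and c2: "card {w\<in>W. w \<noteq> x0 \<and> \<not> \<sigma> w} \<le> card S'"
    and D: "D \<subseteq> W" "x0 \<notin> D" "inj_on f D"
    and Df: "\<forall>w\<in>D. (\<sigma> w \<longrightarrow> f w \<in> S) \<and> (\<not> \<sigma> w \<longrightarrow> f w \<in> S')"
    and Fc: "\<forall>e\<in>F. \<exists>z1 z2. e = {z1,z2} \<and> z1\<in>W \<and> z2\<in>W \<and>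
        (z1 = x0 \<longrightarrow> z2 \<in> D \<and> {v, f z2} \<in> E) \<and> (z2 = x0 \<longrightarrow> z1 \<in> D \<and> {v, f z1} \<in> E) \<and>
        (z1 \<noteq> x0 \<and> z2 \<noteq> x0 \<longrightarrow> \<sigma> z1 \<noteq> \<sigma> z2)"
  shows "\<exists>\<phi>. emb V E W F \<phi> \<and> \<phi> x0 = v \<and>
     (\<forall>w\<in>W. w \<noteq> x0 \<longrightarrow> (\<sigma> w \<longrightarrow> \<phi> w \<in> S) \<and> (\<not> \<sigma> w \<longrightarrow> \<phi> w \<in> S')) \<and> (\<forall>w\<in>D. \<phi> w = f w)"
proof -
  obtain \<phi> where \<phi>: "inj_on \<phi> W" "\<phi> x0 = v"
      "\<forall>w\<in>W. w \<noteq> x0 \<longrightarrow> (\<sigma> w \<longrightarrow> \<phi> w \<in> S) \<and> (\<not> \<sigma> w \<longrightarrow> \<phi> w \<in> S')"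
      "\<forall>w\<in>D. \<phi> w = f w"
    using GE[OF finS finS' disj vS vS' finW c1 c2 D Df] by blast
  have "\<phi> ` W \<subseteq> V" using \<phi> Vdef by fastforce
  moreover have "\<forall>e\<in>F. \<phi> ` e \<in> E"
  proof
    fix e assume eF: "e \<in> F"
    have "\<exists>z1 z2. e = {z1,z2} \<and> z1\<in>W \<and> z2\<in>W \<and>
        (z1 = x0 \<longrightarrow> z2 \<in> D \<and> {v, f z2} \<in> E) \<and> (z2 = x0 \<longrightarrow> z1 \<in> D \<and> {v, f z1} \<in> E) \<and>
        (z1 \<noteq> x0 \<and> z2 \<noteq> x0 \<longrightarrow> \<sigma> z1 \<noteq> \<sigma> z2)" using Fc eF by (rule bspec)
    then obtain z1 z2 where z: "e = {z1,z2}" "z1\<in>W" "z2\<in>W"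
        "z1 = x0 \<longrightarrow> z2 \<in> D \<and> {v, f z2} \<in> E" "z2 = x0 \<longrightarrow> z1 \<in> D \<and> {v, f z1} \<in> E"
        "z1 \<noteq> x0 \<and> z2 \<noteq> x0 \<longrightarrow> \<sigma> z1 \<noteq> \<sigma> z2" by (elim exE conjE) 
    have "{\<phi> z1, \<phi> z2} \<in> E"
    proof (cases "z1 = x0")
      case True
      then have "z2 \<in> D" "{v, f z2} \<in> E" using z by auto
      then show ?thesis using True \<phi>(2,4) by simp
    next
      case False
      show ?thesis
      proof (cases "z2 = x0")
        case True
        then have "z1 \<in> D" "{v, f z1} \<in> E" using z by auto
        then show ?thesis using True \<phi>(2,4) by (simp add: insert_commute)
      next
        case False2: False
        have s: "\<sigma> z1 \<noteq> \<sigma> z2" using False False2 z(6) by blast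
        have m1: "\<sigma> z1 \<Longrightarrow> \<phi> z1 \<in> S" "\<not> \<sigma> z1 \<Longrightarrow> \<phi> z1 \<in> S'" using \<phi>(3) z(2) False by blast+
        have m2: "\<sigma> z2 \<Longrightarrow> \<phi> z2 \<in> S" "\<not> \<sigma> z2 \<Longrightarrow> \<phi> z2 \<in> S'" using \<phi>(3) z(3) False2 by blast+
        show ?thesis
        proof (cases "\<sigma> z1")
          case True
          then show ?thesis using s m1 m2 compl by blast
        next
          case False
          then show ?thesis using s m1 m2 compl2 by blast
        qed
      qed
    qed
    then show "\<phi> ` e \<in> E" using z by simp
  qed
  ultimately show ?thesis using \<phi> unfolding emb_def by blast
qed

lemma same_side_nonedge:
  "a \<in> S \<and> b \<in> S \<or> a \<in> S' \<and> b \<in> S' \<Longrightarrow> {a,b} \<notin> E"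
  using indS indS' by auto

end

context HG begin

lemma LX:
  assumes u2S: "u2 \<in> S" and noS': "\<forall>x\<in>S'. {v,x} \<notin> E"
  shows "intersects_to (V,E) (X_graph p)"
proof -
  define W where "W = {0..2*p}"
  define F where "F = Kpp_edges p \<union> {{2*p,0},{2*p,1}}"
  have XW: "X_graph p = (W,F)" by (simp add: X_graph_def W_def F_def)
  have finW: "finite W" unfolding W_def by simp
  have embx: "\<exists>\<phi>. emb V E W F \<phi> \<and> \<phi> (2*p) = v \<and> (2 \<le> y \<longrightarrow> \<phi> y = u0) \<and>
     (\<forall>z\<in>W. z \<noteq> 2*p \<longrightarrow> (z<p \<longrightarrow> \<phi> z \<in> S) \<and> (\<not> z<p \<longrightarrow> \<phi> z \<in> S'))" if y: "y < p" for y
  proof -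
    define f where "f (z::nat) = (if z = 0 then u1 else if z = 1 then u2 else u0)" for z
    have c1: "{w\<in>W. w \<noteq> 2*p \<and> w<p} = {0..<p}" unfolding W_def by auto
    have c2: "{w\<in>W. w \<noteq> 2*p \<and> \<not> w<p} = {p..<2*p}" unfolding W_def by auto
    have D: "{0,1,y} \<subseteq> W" "2*p \<notin> {0,1,y::nat}" "inj_on f {0,1,y}"
      using y p3 u_distinct unfolding W_def f_def inj_on_def by auto
    have Df: "\<forall>w\<in>{0,1,y}. (w<p \<longrightarrow> f w \<in> S) \<and> (\<not> w<p \<longrightarrow> f w \<in> S')"
      using y p3 u1 u0 u2S unfolding f_def by auto
    have Fc: "\<forall>e\<in>F. \<exists>z1 z2. e = {z1,z2} \<and> z1\<in>W \<and> z2\<in>W \<and>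
        (z1 = 2*p \<longrightarrow> z2 \<in> {0,1,y} \<and> {v, f z2} \<in> E) \<and> (z2 = 2*p \<longrightarrow> z1 \<in> {0,1,y} \<and> {v, f z1} \<in> E) \<and>
        (z1 \<noteq> 2*p \<and> z2 \<noteq> 2*p \<longrightarrow> (z1<p) \<noteq> (z2<p))"
    proof
      fix e assume "e \<in> F"
      then consider "e \<in> Kpp_edges p" | "e = {2*p,0}" | "e = {2*p,1}" unfolding F_def by auto
      then show "\<exists>z1 z2. e = {z1,z2} \<and> z1\<in>W \<and> z2\<in>W \<and>
        (z1 = 2*p \<longrightarrow> z2 \<in> {0,1,y} \<and> {v, f z2} \<in> E) \<and> (z2 = 2*p \<longrightarrow> z1 \<in> {0,1,y} \<and> {v, f z1} \<in> E) \<and>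
        (z1 \<noteq> 2*p \<and> z2 \<noteq> 2*p \<longrightarrow> (z1<p) \<noteq> (z2<p))"
      proof cases
        case 1
        then obtain a b where "e={a,b}" "a<p" "p\<le>b" "b<2*p" using Kpp_form by blast
        then show ?thesis unfolding W_def by (intro exI[of _ a] exI[of _ b]) auto
      next
        case 2 then show ?thesis using u1 p3 unfolding W_def f_def by (intro exI[of _ "2*p"] exI[of _ 0]) auto
      next
        case 3 then show ?thesis using u2 p3 unfolding W_def f_def by (intro exI[of _ "2*p"] exI[of _ 1]) auto
      qed
    qed
    have cc1: "card {w\<in>W. w \<noteq> 2*p \<and> w<p} \<le> card S" using c1 cS by simp
    have cc2: "card {w\<in>W. w \<noteq> 2*p \<and> \<not> w<p} \<le> card S'" using c2 cS' by simp
    obtain \<phi> where \<phi>: "emb V E W F \<phi>" "\<phi> (2*p) = v"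
        "\<forall>w\<in>W. w \<noteq> 2*p \<longrightarrow> (w<p \<longrightarrow> \<phi> w \<in> S) \<and> (\<not> w<p \<longrightarrow> \<phi> w \<in> S')"
        "\<forall>w\<in>{0,1,y}. \<phi> w = f w"
      using embG[OF finW cc1 cc2 D Df Fc] by blast
    then show ?thesis unfolding f_def by auto
  qed
  have "intersects_to (V,E) (W,F)"
  proof (rule M1[OF finV simpE finW])
    show "\<forall>f\<in>F. f \<subseteq> W" using p3 unfolding F_def W_def Kpp_edges_def by auto
    show "\<exists>\<phi>. emb V E W F \<phi>" using embx[of 0] p3 by auto
  next
    have aux: "\<exists>\<phi>. emb V E W F \<phi> \<and> {\<phi> (2*p), \<phi> z} \<notin> E"
      if z: "z \<in> W" "z \<noteq> 2*p" "{2*p,z} \<notin> F" for z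
    proof (cases "z < p")
      case True
      then have "2 \<le> z" using z unfolding F_def by auto
      then show ?thesis using embx[OF True] u0 by auto
    next
      case False
      obtain \<phi> where \<phi>: "emb V E W F \<phi>" "\<phi> (2*p) = v"
        "\<forall>z\<in>W. z \<noteq> 2*p \<longrightarrow> (z<p \<longrightarrow> \<phi> z \<in> S) \<and> (\<not> z<p \<longrightarrow> \<phi> z \<in> S')"
        using embx[of 0] p3 by auto
      then have "\<phi> z \<in> S'" using z False by auto
      then show ?thesis using \<phi> noS' by auto
    qed
    fix x y assume xy: "x \<in> W" "y \<in> W" "x \<noteq> y" "{x,y} \<notin> F"
    show "\<exists>\<phi>. emb V E W F \<phi> \<and> {\<phi> x, \<phi> y} \<notin> E"
    proof (cases "x = 2*p")
      case True then show ?thesis using aux[of y] xy by auto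
    next
      case False
      show ?thesis
      proof (cases "y = 2*p")
        case True then show ?thesis using aux[of x] xy by (auto simp: insert_commute)
      next
        case False2: False
        have lt: "x < 2*p" "y < 2*p" using xy False False2 unfolding W_def by auto
        have "{x,y} \<notin> Kpp_edges p" using xy unfolding F_def by auto
        then have side: "(x<p) = (y<p)" using Kpp_iff[of x y p] lt by auto
        obtain \<phi> where \<phi>: "emb V E W F \<phi>" "\<phi> (2*p) = v"
          "\<forall>z\<in>W. z \<noteq> 2*p \<longrightarrow> (z<p \<longrightarrow> \<phi> z \<in> S) \<and> (\<not> z<p \<longrightarrow> \<phi> z \<in> S')"
          using embx[of 0] p3 by auto
        have "\<phi> x \<in> S \<and> \<phi> y \<in> S \<or> \<phi> x \<in> S' \<and> \<phi> y \<in> S'"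
          using \<phi>(3) xy(1,2) False False2 side by (cases "x < p") auto
        then show ?thesis using \<phi>(1) same_side_nonedge by blast
      qed
    qed
  qed
  then show ?thesis using XW by simp
qed

lemma LY:
  assumes u2S': "u2 \<in> S'"
  shows "intersects_to (V,E) (Y_graph p)"
proof -
  define W where "W = {0..2*p}"
  define F where "F = Kpp_edges p \<union> {{2*p,0},{2*p,p}}"
  have YW: "Y_graph p = (W,F)" by (simp add: Y_graph_def W_def F_def)
  have finW: "finite W" unfolding W_def by simp
  have emby: "\<exists>\<phi>. emb V E W F \<phi> \<and> \<phi> (2*p) = v \<and> (y \<notin> {0,p} \<longrightarrow> \<phi> y = u0) \<and>
     (\<forall>z\<in>W. z \<noteq> 2*p \<longrightarrow> ((z<p) = (y<p) \<longrightarrow> \<phi> z \<in> S) \<and> ((z<p) \<noteq> (y<p) \<longrightarrow> \<phi> z \<in> S'))"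
    if y: "y < 2*p" for y
  proof -
    define f where "f (z::nat) = (if z = 0 then (if y<p then u1 else u2) else if z = p then (if y<p then u2 else u1) else u0)" for z
    define \<sigma> where "\<sigma> (z::nat) = ((z<p) = (y<p))" for z
    have c1: "{w\<in>W. w \<noteq> 2*p \<and> \<sigma> w} = (if y<p then {0..<p} else {p..<2*p})" unfolding W_def \<sigma>_def by auto
    have c2: "{w\<in>W. w \<noteq> 2*p \<and> \<not> \<sigma> w} = (if y<p then {p..<2*p} else {0..<p})" unfolding W_def \<sigma>_def by auto
    have D: "{0,p,y} \<subseteq> W" "2*p \<notin> {0,p,y::nat}" "inj_on f {0,p,y}"
      using y p3 u_distinct unfolding W_def f_def inj_on_def by auto
    have Df: "\<forall>w\<in>{0,p,y}. (\<sigma> w \<longrightarrow> f w \<in> S) \<and> (\<not> \<sigma> w \<longrightarrow> f w \<in> S')"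
      using y p3 u1 u0 u2S' unfolding f_def \<sigma>_def by auto
    have Fc: "\<forall>e\<in>F. \<exists>z1 z2. e = {z1,z2} \<and> z1\<in>W \<and> z2\<in>W \<and>
        (z1 = 2*p \<longrightarrow> z2 \<in> {0,p,y} \<and> {v, f z2} \<in> E) \<and> (z2 = 2*p \<longrightarrow> z1 \<in> {0,p,y} \<and> {v, f z1} \<in> E) \<and>
        (z1 \<noteq> 2*p \<and> z2 \<noteq> 2*p \<longrightarrow> \<sigma> z1 \<noteq> \<sigma> z2)"
    proof
      fix e assume "e \<in> F"
      then consider "e \<in> Kpp_edges p" | "e = {2*p,0}" | "e = {2*p,p}" unfolding F_def by auto
      then show "\<exists>z1 z2. e = {z1,z2} \<and> z1\<in>W \<and> z2\<in>W \<and>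
        (z1 = 2*p \<longrightarrow> z2 \<in> {0,p,y} \<and> {v, f z2} \<in> E) \<and> (z2 = 2*p \<longrightarrow> z1 \<in> {0,p,y} \<and> {v, f z1} \<in> E) \<and>
        (z1 \<noteq> 2*p \<and> z2 \<noteq> 2*p \<longrightarrow> \<sigma> z1 \<noteq> \<sigma> z2)"
      proof cases
        case 1
        then obtain a b where "e={a,b}" "a<p" "p\<le>b" "b<2*p" using Kpp_form by blast
        then show ?thesis unfolding W_def \<sigma>_def by (intro exI[of _ a] exI[of _ b]) auto
      next
        case 2 then show ?thesis using u1 u2 p3 unfolding W_def f_def by (intro exI[of _ "2*p"] exI[of _ 0]) auto
      next
        case 3 then show ?thesis using u1 u2 p3 unfolding W_def f_def by (intro exI[of _ "2*p"] exI[of _ p]) auto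
      qed
    qed
    have cc1: "card {w\<in>W. w \<noteq> 2*p \<and> \<sigma> w} \<le> card S" using c1 cS by simp
    have cc2: "card {w\<in>W. w \<noteq> 2*p \<and> \<not> \<sigma> w} \<le> card S'" using c2 cS' by simp
    obtain \<phi> where \<phi>: "emb V E W F \<phi>" "\<phi> (2*p) = v"
        "\<forall>w\<in>W. w \<noteq> 2*p \<longrightarrow> (\<sigma> w \<longrightarrow> \<phi> w \<in> S) \<and> (\<not> \<sigma> w \<longrightarrow> \<phi> w \<in> S')"
        "\<forall>w\<in>{0,p,y}. \<phi> w = f w"
      using embG[OF finW cc1 cc2 D Df Fc] by blast
    then show ?thesis unfolding f_def \<sigma>_def by auto
  qed
  have "intersects_to (V,E) (W,F)"
  proof (rule M1[OF finV simpE finW])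
    show "\<forall>f\<in>F. f \<subseteq> W" using p3 unfolding F_def W_def Kpp_edges_def by auto
    show "\<exists>\<phi>. emb V E W F \<phi>" using emby[of 0] p3 by auto
  next
    have aux: "\<exists>\<phi>. emb V E W F \<phi> \<and> {\<phi> (2*p), \<phi> z} \<notin> E"
      if z: "z \<in> W" "z \<noteq> 2*p" "{2*p,z} \<notin> F" for z
    proof -
      have "z \<notin> {0,p}" "z < 2*p" using z unfolding F_def W_def by auto
      then show ?thesis using emby[of z] u0 by auto
    qed
    fix x y assume xy: "x \<in> W" "y \<in> W" "x \<noteq> y" "{x,y} \<notin> F"
    show "\<exists>\<phi>. emb V E W F \<phi> \<and> {\<phi> x, \<phi> y} \<notin> E"
    proof (cases "x = 2*p")
      case True then show ?thesis using aux[of y] xy by auto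
    next
      case False
      show ?thesis
      proof (cases "y = 2*p")
        case True then show ?thesis using aux[of x] xy by (auto simp: insert_commute)
      next
        case False2: False
        have lt: "x < 2*p" "y < 2*p" using xy False False2 unfolding W_def by auto
        have "{x,y} \<notin> Kpp_edges p" using xy unfolding F_def by auto
        then have side: "(x<p) = (y<p)" using Kpp_iff[of x y p] lt by auto
        obtain \<phi> where \<phi>: "emb V E W F \<phi>" "\<phi> (2*p) = v"
          "\<forall>z\<in>W. z \<noteq> 2*p \<longrightarrow> ((z<p) = (0<p) \<longrightarrow> \<phi> z \<in> S) \<and> ((z<p) \<noteq> (0<p) \<longrightarrow> \<phi> z \<in> S')"
          using emby[of 0] p3 by auto
        have "\<phi> x \<in> S \<and> \<phi> y \<in> S \<or> \<phi> x \<in> S' \<and> \<phi> y \<in> S'"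
          using \<phi>(3) xy(1,2) False False2 side p3 by (cases "x < p") auto
        then show ?thesis using \<phi>(1) same_side_nonedge by blast
      qed
    qed
  qed
  then show ?thesis using YW by simp
qed

end

definition tadj :: "nat \<Rightarrow> nat\<times>nat\<times>nat \<Rightarrow> nat\<times>nat\<times>nat \<Rightarrow> bool" where
  "tadj t z1 z2 \<longleftrightarrow> fst z1 = fst z2 \<and> fst z1 < t \<and> 1 \<le> fst (snd z2) \<and> fst (snd z2) \<le> 3 \<and>
     ((fst (snd z1) = 0 \<and> snd (snd z1) = 0 \<and> snd (snd z2) = 1) \<or>
      (fst (snd z1) = fst (snd z2) \<and> 1 \<le> snd (snd z1) \<and> snd (snd z1) < t \<and> snd (snd z2) = Suc (snd (snd z1))))"

lemma tW: "(i,j,k) \<in> fst (tS_graph t) \<longleftrightarrow> i < t \<and> ((j = 0 \<and> k = 0) \<or> (1 \<le> j \<and> j \<le> 3 \<and> 1 \<le> k \<and> k \<le> t))"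
  unfolding tS_graph_def by auto

lemma tW': "z \<in> fst (tS_graph t) \<longleftrightarrow> fst z < t \<and> ((fst (snd z) = 0 \<and> snd (snd z) = 0) \<or>
   (1 \<le> fst (snd z) \<and> fst (snd z) \<le> 3 \<and> 1 \<le> snd (snd z) \<and> snd (snd z) \<le> t))"
  by (cases z) (simp add: tW)

lemma tF_form: "e \<in> snd (tS_graph t) \<Longrightarrow> \<exists>z1 z2. e = {z1,z2} \<and> tadj t z1 z2"
proof -
  assume "e \<in> snd (tS_graph t)"
  then consider (a) i j where "e = {(i, 0, 0), (i, j, 1)}" "i < t" "1 \<le> j" "j \<le> 3"
    | (b) i j k where "e = {(i, j, k), (i, j, Suc k)}" "i < t" "1 \<le> j" "j \<le> 3" "1 \<le> k" "k < t"
    unfolding tS_graph_def by auto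
  then show ?thesis
  proof cases
    case a then show ?thesis unfolding tadj_def by (intro exI[of _ "(i,0,0)"] exI[of _ "(i,j,1)"]) simp
  next
    case b then show ?thesis unfolding tadj_def by (intro exI[of _ "(i,j,k)"] exI[of _ "(i,j,Suc k)"]) simp
  qed
qed

lemma tadj_F: "tadj t z1 z2 \<Longrightarrow> {z1,z2} \<in> snd (tS_graph t)"
proof -
  assume a: "tadj t z1 z2"
  obtain i j k where z1: "z1 = (i,j,k)" by (cases z1)
  obtain i' j' k' where z2: "z2 = (i',j',k')" by (cases z2)
  from a consider "i' = i" "i < t" "1 \<le> j'" "j' \<le> 3" "j = 0" "k = 0" "k' = 1"
    | "i' = i" "i < t" "1 \<le> j'" "j' \<le> 3" "j' = j" "1 \<le> k" "k < t" "k' = Suc k"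
    unfolding z1 z2 tadj_def by auto
  then show ?thesis
  proof cases
    case 1
    then have "{z1,z2} \<in> {{(i, 0, 0), (i, j, 1)} | i j. i < t \<and> 1 \<le> j \<and> j \<le> 3}"
      unfolding z1 z2 by blast
    then show ?thesis unfolding tS_graph_def by simp
  next
    case 2
    then have "{z1,z2} \<in> {{(i, j, k), (i, j, Suc k)} | i j k. i < t \<and> 1 \<le> j \<and> j \<le> 3 \<and> 1 \<le> k \<and> k < t}"
      unfolding z1 z2 by blast
    then show ?thesis unfolding tS_graph_def by simp
  qed
qed

lemma tadj_W: "tadj t z1 z2 \<Longrightarrow> z1 \<in> fst (tS_graph t) \<and> z2 \<in> fst (tS_graph t)"
  unfolding tW' tadj_def by auto

lemma tadj_par: "tadj t z1 z2 \<Longrightarrow> odd (snd (snd z1)) \<noteq> odd (snd (snd z2))"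
  unfolding tadj_def by auto

lemma tadj_fst: "tadj t z1 z2 \<Longrightarrow> fst z1 = fst z2"
  unfolding tadj_def by auto

lemma tW_sub: "fst (tS_graph t) \<subseteq> (\<lambda>i. (i,0::nat,0::nat)) ` {..<t} \<union> ({..<t} \<times> {1..3} \<times> {1..t})"
  unfolding tS_graph_def by auto

lemma tW_fin: "finite (fst (tS_graph t))"
  by (rule finite_subset[OF tW_sub]) auto

lemma tW_card: "card (fst (tS_graph t)) \<le> 3*t^2 + t"
proof -
  have "card (fst (tS_graph t)) \<le> card ((\<lambda>i. (i,0::nat,0::nat)) ` {..<t} \<union> ({..<t} \<times> {1..3} \<times> {1..t}))"
    by (rule card_mono[OF _ tW_sub]) auto
  also have "\<dots> \<le> card ((\<lambda>i. (i,0::nat,0::nat)) ` {..<t}) + card ({..<t} \<times> {1..3::nat} \<times> {1..t})"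
    by (rule card_Un_le)
  also have "\<dots> \<le> t + t * (3 * t)" using card_image_le[of "{..<t}" "\<lambda>i. (i,0::nat,0::nat)"]
    by (simp add: card_cartesian_product)
  finally show ?thesis by (simp add: power2_eq_square)
qed

context HG begin

lemma embT:
  fixes t :: nat and \<sigma> :: "nat\<times>nat\<times>nat \<Rightarrow> bool"
  assumes tp: "3*t^2 + t + 1 \<le> p"
    and D: "D \<subseteq> fst (tS_graph t)" "x0 \<notin> D" "inj_on f D"
    and Df: "\<forall>w\<in>D. (\<sigma> w \<longrightarrow> f w \<in> S) \<and> (\<not> \<sigma> w \<longrightarrow> f w \<in> S')"
    and Ec: "\<And>z1 z2. tadj t z1 z2 \<Longrightarrow> (z1 = x0 \<longrightarrow> z2 \<in> D \<and> {v, f z2} \<in> E) \<and>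
       (z2 = x0 \<longrightarrow> z1 \<in> D \<and> {v, f z1} \<in> E) \<and> (z1 \<noteq> x0 \<and> z2 \<noteq> x0 \<longrightarrow> \<sigma> z1 \<noteq> \<sigma> z2)"
  shows "\<exists>\<phi>. emb V E (fst (tS_graph t)) (snd (tS_graph t)) \<phi> \<and> \<phi> x0 = v \<and>
     (\<forall>w\<in>fst (tS_graph t). w \<noteq> x0 \<longrightarrow> (\<sigma> w \<longrightarrow> \<phi> w \<in> S) \<and> (\<not> \<sigma> w \<longrightarrow> \<phi> w \<in> S')) \<and> (\<forall>w\<in>D. \<phi> w = f w)"
proof -
  let ?W = "fst (tS_graph t)"
  have cW: "card ?W \<le> p" using tW_card[of t] tp by simp
  have c1: "card {w\<in>?W. w \<noteq> x0 \<and> \<sigma> w} \<le> card S"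
    using card_mono[OF tW_fin[of t], of "{w\<in>?W. w \<noteq> x0 \<and> \<sigma> w}"] cW cS by auto
  have c2: "card {w\<in>?W. w \<noteq> x0 \<and> \<not> \<sigma> w} \<le> card S'"
    using card_mono[OF tW_fin[of t], of "{w\<in>?W. w \<noteq> x0 \<and> \<not> \<sigma> w}"] cW cS' by auto
  have Fc: "\<forall>e\<in>snd (tS_graph t). \<exists>z1 z2. e = {z1,z2} \<and> z1\<in>?W \<and> z2\<in>?W \<and>
        (z1 = x0 \<longrightarrow> z2 \<in> D \<and> {v, f z2} \<in> E) \<and> (z2 = x0 \<longrightarrow> z1 \<in> D \<and> {v, f z1} \<in> E) \<and>
        (z1 \<noteq> x0 \<and> z2 \<noteq> x0 \<longrightarrow> \<sigma> z1 \<noteq> \<sigma> z2)"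
  proof
    fix e assume "e \<in> snd (tS_graph t)"
    then obtain z1 z2 where z: "e = {z1,z2}" "tadj t z1 z2" using tF_form by blast
    show "\<exists>z1 z2. e = {z1,z2} \<and> z1\<in>?W \<and> z2\<in>?W \<and>
        (z1 = x0 \<longrightarrow> z2 \<in> D \<and> {v, f z2} \<in> E) \<and> (z2 = x0 \<longrightarrow> z1 \<in> D \<and> {v, f z1} \<in> E) \<and>
        (z1 \<noteq> x0 \<and> z2 \<noteq> x0 \<longrightarrow> \<sigma> z1 \<noteq> \<sigma> z2)"
      using z tadj_W[OF z(2)] Ec[OF z(2)] by blast
  qed
  show ?thesis using embG[OF tW_fin c1 c2 D Df Fc] .
qed

lemma LT_C1:
  assumes tp: "3*t^2 + t + 1 \<le> p"
    and ab: "a \<in> fst (tS_graph t)" "b \<in> fst (tS_graph t)" "odd (snd (snd a)) = odd (snd (snd b))"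
  shows "\<exists>\<phi>. emb V E (fst (tS_graph t)) (snd (tS_graph t)) \<phi> \<and> {\<phi> a, \<phi> b} \<notin> E"
proof -
  let ?x0 = "(0::nat,0::nat,1::nat)"
  have x0: "?x0 \<notin> fst (tS_graph t)" by (simp add: tW)
  obtain \<phi> where \<phi>: "emb V E (fst (tS_graph t)) (snd (tS_graph t)) \<phi>"
     "\<forall>w\<in>fst (tS_graph t). w \<noteq> ?x0 \<longrightarrow> (odd (snd (snd w)) \<longrightarrow> \<phi> w \<in> S) \<and> (\<not> odd (snd (snd w)) \<longrightarrow> \<phi> w \<in> S')"
  proof -
    have "\<exists>\<phi>. emb V E (fst (tS_graph t)) (snd (tS_graph t)) \<phi> \<and> \<phi> ?x0 = v \<and>
     (\<forall>w\<in>fst (tS_graph t). w \<noteq> ?x0 \<longrightarrow> (odd (snd (snd w)) \<longrightarrow> \<phi> w \<in> S) \<and> (\<not> odd (snd (snd w)) \<longrightarrow> \<phi> w \<in> S')) \<and> (\<forall>w\<in>{}. \<phi> w = (\<lambda>_. v) w)"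
    proof (rule embT[OF tp])
      fix z1 z2 assume "tadj t z1 z2"
      then show "(z1 = ?x0 \<longrightarrow> z2 \<in> {} \<and> {v, (\<lambda>_. v) z2} \<in> E) \<and> (z2 = ?x0 \<longrightarrow> z1 \<in> {} \<and> {v, (\<lambda>_. v) z1} \<in> E) \<and>
         (z1 \<noteq> ?x0 \<and> z2 \<noteq> ?x0 \<longrightarrow> odd (snd (snd z1)) \<noteq> odd (snd (snd z2)))"
        using tadj_W tadj_par x0 by metis
    qed auto
    then show ?thesis using that by blast
  qed
  have "a \<noteq> ?x0" "b \<noteq> ?x0" using ab x0 by auto
  then have "\<phi> a \<in> S \<and> \<phi> b \<in> S \<or> \<phi> a \<in> S' \<and> \<phi> b \<in> S'"
    using \<phi>(2) ab by (cases "odd (snd (snd a))") auto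
  then show ?thesis using \<phi>(1) same_side_nonedge by blast
qed

lemma LT_C2:
  assumes tp: "3*t^2 + t + 1 \<le> p"
    and ab: "a \<in> fst (tS_graph t)" "b \<in> fst (tS_graph t)" "odd (snd (snd a)) \<noteq> odd (snd (snd b))"
       "fst a \<noteq> fst b"
  shows "\<exists>\<phi>. emb V E (fst (tS_graph t)) (snd (tS_graph t)) \<phi> \<and> {\<phi> a, \<phi> b} \<notin> E"
proof -
  let ?x0 = "(0::nat,0::nat,1::nat)"
  define \<sigma> where "\<sigma> w = (odd (snd (snd w)) \<noteq> (fst w = fst b))" for w :: "nat\<times>nat\<times>nat"
  have x0: "?x0 \<notin> fst (tS_graph t)" by (simp add: tW)
  obtain \<phi> where \<phi>: "emb V E (fst (tS_graph t)) (snd (tS_graph t)) \<phi>"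
     "\<forall>w\<in>fst (tS_graph t). w \<noteq> ?x0 \<longrightarrow> (\<sigma> w \<longrightarrow> \<phi> w \<in> S) \<and> (\<not> \<sigma> w \<longrightarrow> \<phi> w \<in> S')"
  proof -
    have "\<exists>\<phi>. emb V E (fst (tS_graph t)) (snd (tS_graph t)) \<phi> \<and> \<phi> ?x0 = v \<and>
     (\<forall>w\<in>fst (tS_graph t). w \<noteq> ?x0 \<longrightarrow> (\<sigma> w \<longrightarrow> \<phi> w \<in> S) \<and> (\<not> \<sigma> w \<longrightarrow> \<phi> w \<in> S')) \<and> (\<forall>w\<in>{}. \<phi> w = (\<lambda>_. v) w)"
    proof (rule embT[OF tp])
      fix z1 z2 assume a: "tadj t z1 z2"
      have "\<sigma> z1 \<noteq> \<sigma> z2" using tadj_par[OF a] tadj_fst[OF a] unfolding \<sigma>_def by auto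
      then show "(z1 = ?x0 \<longrightarrow> z2 \<in> {} \<and> {v, (\<lambda>_. v) z2} \<in> E) \<and> (z2 = ?x0 \<longrightarrow> z1 \<in> {} \<and> {v, (\<lambda>_. v) z1} \<in> E) \<and>
         (z1 \<noteq> ?x0 \<and> z2 \<noteq> ?x0 \<longrightarrow> \<sigma> z1 \<noteq> \<sigma> z2)"
        using tadj_W[OF a] x0 by metis
    qed auto
    then show ?thesis using that by blast
  qed
  have "a \<noteq> ?x0" "b \<noteq> ?x0" using ab x0 by auto
  moreover have "\<sigma> a = \<sigma> b" using ab unfolding \<sigma>_def by auto
  ultimately have "\<phi> a \<in> S \<and> \<phi> b \<in> S \<or> \<phi> a \<in> S' \<and> \<phi> b \<in> S'"
    using \<phi>(2) ab by (cases "\<sigma> a") auto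
  then show ?thesis using \<phi>(1) same_side_nonedge by blast
qed

end

context HG begin

lemma LT_C3:
  assumes tp: "3*t^2 + t + 1 \<le> p"
    and x: "(i,j,k) \<in> fst (tS_graph t)" "1 \<le> k"
    and y: "y \<in> fst (tS_graph t)" "fst y = i" "odd (snd (snd y)) \<noteq> odd k" "y \<noteq> (i,j,k)"
       "\<not> tadj t (i,j,k) y" "\<not> tadj t y (i,j,k)"
  shows "\<exists>\<phi>. emb V E (fst (tS_graph t)) (snd (tS_graph t)) \<phi> \<and> {\<phi> (i,j,k), \<phi> y} \<notin> E"
proof -
  let ?W = "fst (tS_graph t)"
  let ?x = "(i,j,k)"
  have xf: "i < t" "1 \<le> j" "j \<le> 3" "k \<le> t" using x by (auto simp: tW)
  define prv where "prv = (if k = 1 then (i,0::nat,0::nat) else (i,j,k-1))"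
  define nxt where "nxt = (i,j,Suc k)"
  define tail where "tail z = (fst z = i \<and> fst (snd z) = j \<and> k < snd (snd z))" for z :: "nat\<times>nat\<times>nat"
  have adj_prv: "tadj t prv ?x" unfolding prv_def tadj_def using xf x(2) by auto
  have adj_nxt: "k < t \<Longrightarrow> tadj t ?x nxt" unfolding nxt_def tadj_def using xf x(2) by auto
  have nb1: "tadj t ?x z \<Longrightarrow> z = nxt \<and> k < t" for z
    using x(2) by (cases z) (auto simp: tadj_def nxt_def)
  have nb2: "tadj t z ?x \<Longrightarrow> z = prv" for z
    using x(2) by (cases z) (auto simp: tadj_def prv_def)
  have prvW: "prv \<in> ?W" using tadj_W[OF adj_prv] by simp
  have nxtW: "nxt \<in> ?W \<longleftrightarrow> k < t" using xf by (auto simp: nxt_def tW)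
  have y_prv: "y \<noteq> prv" using adj_prv y(6) by auto
  have y_nxt: "k < t \<Longrightarrow> y \<noteq> nxt" using adj_nxt y(5) by auto
  have yK: "snd (snd y) \<le> t" using y(1) by (auto simp: tW')
  have tail_y_k: "tail y \<Longrightarrow> k < t" using yK unfolding tail_def by auto
  have par_prv: "odd (snd (snd prv)) \<noteq> odd k" using x(2) unfolding prv_def by auto
  have par_nxt: "odd (snd (snd nxt)) \<noteq> odd k" unfolding nxt_def by auto
  have tail_nxt: "tail nxt" unfolding tail_def nxt_def by simp
  have tail_prv: "\<not> tail prv" unfolding tail_def prv_def by auto
  have prv_x: "prv \<noteq> ?x" using x(2) unfolding prv_def by auto
  have nxt_x: "nxt \<noteq> ?x" unfolding nxt_def by auto
  have prv_nxt: "prv \<noteq> nxt" unfolding prv_def nxt_def by auto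
  define ny where "ny = (if tail y then nxt else prv)"
  define no where "no = (if tail y then prv else nxt)"
  define flag where "flag = (u2 \<in> S')"
  define \<sigma> where "\<sigma> z = ((odd (snd (snd z)) = odd (snd (snd y))) \<noteq> (flag \<and> tail z \<noteq> tail y))" for z
  define D where "D = {ny, y} \<union> ({no} \<inter> ?W)"
  define f where "f z = (if z = ny then u1 else if z = no then u2 else u0)" for z
  have nyW: "ny \<in> ?W" using prvW nxtW tail_y_k unfolding ny_def by auto
  have ny_no: "ny \<noteq> no" using prv_nxt unfolding ny_def no_def by auto
  have y_ny: "y \<noteq> ny" using y_prv y_nxt tail_y_k unfolding ny_def by auto
  have y_no: "no \<in> ?W \<Longrightarrow> y \<noteq> no" using y_prv y_nxt nxtW unfolding no_def by auto
  have DW: "D \<subseteq> ?W" using nyW y(1) unfolding D_def by auto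
  have xD: "?x \<notin> D" using prv_x nxt_x y(4) unfolding D_def ny_def no_def by auto
  have fy: "f y = u0" using y_ny y_no y(1) unfolding f_def by auto
  have fny: "f ny = u1" unfolding f_def by simp
  have fno: "f no = u2" using ny_no unfolding f_def by simp
  have injf: "inj_on f D"
  proof (rule inj_onI)
    fix a b assume ab: "a \<in> D" "b \<in> D" "f a = f b"
    have vals: "a \<in> D \<Longrightarrow> (a = ny \<and> f a = u1) \<or> (a = y \<and> f a = u0) \<or> (a = no \<and> f a = u2)" for a
      using fy fny fno unfolding D_def by auto
    show "a = b" using vals[OF ab(1)] vals[OF ab(2)] ab(3) u_distinct by metis
  qed
  have par_ny: "odd (snd (snd ny)) = odd (snd (snd y))" using par_prv par_nxt y(3) unfolding ny_def by auto
  have par_no: "odd (snd (snd no)) = odd (snd (snd y))" using par_prv par_nxt y(3) unfolding no_def by auto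
  have tail_ny: "tail ny = tail y" using tail_nxt tail_prv unfolding ny_def by auto
  have tail_no: "tail no \<noteq> tail y" using tail_nxt tail_prv unfolding no_def by auto
  have u2side: "(\<not> flag \<longrightarrow> u2 \<in> S) \<and> (flag \<longrightarrow> u2 \<in> S')" using u2SS unfolding flag_def by auto
  have Df: "\<forall>w\<in>D. (\<sigma> w \<longrightarrow> f w \<in> S) \<and> (\<not> \<sigma> w \<longrightarrow> f w \<in> S')"
  proof
    fix w assume "w \<in> D"
    then consider "w = ny" | "w = y" | "w = no" unfolding D_def by auto
    then show "(\<sigma> w \<longrightarrow> f w \<in> S) \<and> (\<not> \<sigma> w \<longrightarrow> f w \<in> S')"
    proof cases
      case 1 then show ?thesis using par_ny tail_ny fny u1 unfolding \<sigma>_def by simp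
    next
      case 2 then show ?thesis using fy u0 unfolding \<sigma>_def by simp
    next
      case 3 then show ?thesis using par_no tail_no fno u2side unfolding \<sigma>_def by auto
    qed
  qed
  have tail_eq: "tadj t z1 z2 \<Longrightarrow> z1 \<noteq> ?x \<Longrightarrow> tail z1 = tail z2" for z1 z2
    using xf x(2) by (cases z1; cases z2) (auto simp: tadj_def tail_def)
  have fv: "z \<in> {ny, no} \<Longrightarrow> {v, f z} \<in> E" for z using fny fno u1 u2 by auto
  have Ec: "(z1 = ?x \<longrightarrow> z2 \<in> D \<and> {v, f z2} \<in> E) \<and>
       (z2 = ?x \<longrightarrow> z1 \<in> D \<and> {v, f z1} \<in> E) \<and> (z1 \<noteq> ?x \<and> z2 \<noteq> ?x \<longrightarrow> \<sigma> z1 \<noteq> \<sigma> z2)"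
    if a: "tadj t z1 z2" for z1 z2
  proof (intro conjI impI)
    assume "z1 = ?x"
    then have "z2 = nxt" "k < t" using nb1 a by auto
    then have "z2 \<in> {ny, no}" "z2 \<in> ?W" using nxtW unfolding ny_def no_def by auto
    then show "z2 \<in> D" "{v, f z2} \<in> E" using fv unfolding D_def by auto
  next
    assume "z2 = ?x"
    then have "z1 = prv" using nb2 a by auto
    then have "z1 \<in> {ny, no}" "z1 \<in> ?W" using prvW unfolding ny_def no_def by auto
    then show "z1 \<in> D" "{v, f z1} \<in> E" using fv unfolding D_def by auto
  next
    assume "z1 \<noteq> ?x \<and> z2 \<noteq> ?x"
    then show "\<sigma> z1 \<noteq> \<sigma> z2" using tail_eq[OF a] tadj_par[OF a] unfolding \<sigma>_def by auto
  qed
  obtain \<phi> where \<phi>: "emb V E ?W (snd (tS_graph t)) \<phi>" "\<phi> ?x = v" "\<forall>w\<in>D. \<phi> w = f w"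
    using embT[OF tp DW xD injf Df Ec] by blast
  have "\<phi> y = u0" using \<phi>(3) fy unfolding D_def by auto
  then show ?thesis using \<phi> u0 by auto
qed

lemma emb_ex:
  assumes tp: "3*t^2 + t + 1 \<le> p"
  shows "\<exists>\<phi>. emb V E (fst (tS_graph t)) (snd (tS_graph t)) \<phi>"
proof -
  let ?x0 = "(0::nat,0::nat,1::nat)"
  have x0: "?x0 \<notin> fst (tS_graph t)" by (simp add: tW)
  have "\<exists>\<phi>. emb V E (fst (tS_graph t)) (snd (tS_graph t)) \<phi> \<and> \<phi> ?x0 = v \<and>
     (\<forall>w\<in>fst (tS_graph t). w \<noteq> ?x0 \<longrightarrow> (odd (snd (snd w)) \<longrightarrow> \<phi> w \<in> S) \<and> (\<not> odd (snd (snd w)) \<longrightarrow> \<phi> w \<in> S')) \<and> (\<forall>w\<in>{}. \<phi> w = (\<lambda>_. v) w)"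
  proof (rule embT[OF tp])
    fix z1 z2 assume "tadj t z1 z2"
    then show "(z1 = ?x0 \<longrightarrow> z2 \<in> {} \<and> {v, (\<lambda>_. v) z2} \<in> E) \<and> (z2 = ?x0 \<longrightarrow> z1 \<in> {} \<and> {v, (\<lambda>_. v) z1} \<in> E) \<and>
       (z1 \<noteq> ?x0 \<and> z2 \<noteq> ?x0 \<longrightarrow> odd (snd (snd z1)) \<noteq> odd (snd (snd z2)))"
      using tadj_W tadj_par x0 by metis
  qed auto
  then show ?thesis by blast
qed

lemma LT:
  assumes tp: "3*t^2 + t + 1 \<le> p"
  shows "intersects_to (V,E) (tS_graph t)"
proof -
  let ?W = "fst (tS_graph t)" and ?F = "snd (tS_graph t)"
  have "intersects_to (V,E) (?W, ?F)"
  proof (rule M1[OF finV simpE tW_fin])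
    show "\<forall>f\<in>?F. f \<subseteq> ?W" using tF_form tadj_W by blast
    show "\<exists>\<phi>. emb V E ?W ?F \<phi>" using emb_ex[OF tp] .
  next
    fix a b assume ab: "a \<in> ?W" "b \<in> ?W" "a \<noteq> b" "{a,b} \<notin> ?F"
    have na: "\<not> tadj t a b" "\<not> tadj t b a" using ab(4) tadj_F by (metis insert_commute)+
    show "\<exists>\<phi>. emb V E ?W ?F \<phi> \<and> {\<phi> a, \<phi> b} \<notin> E"
    proof (cases "odd (snd (snd a)) = odd (snd (snd b))")
      case True then show ?thesis using LT_C1[OF tp ab(1,2)] by blast
    next
      case npar: False
      show ?thesis
      proof (cases "fst a = fst b")
        case False then show ?thesis using LT_C2[OF tp ab(1,2) npar] by blast
      next
        case True
        obtain i j k where a: "a = (i,j,k)" by (cases a)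
        obtain i' j' k' where b: "b = (i',j',k')" by (cases b)
        show ?thesis
        proof (cases "1 \<le> k")
          case True
          show ?thesis using LT_C3[OF tp, of i j k b] ab na npar True \<open>fst a = fst b\<close> unfolding a by auto
        next
          case False
          then have "k = 0" by simp
          then have "1 \<le> k'" using npar unfolding a b by (cases k') auto
          then have "\<exists>\<phi>. emb V E ?W ?F \<phi> \<and> {\<phi> (i',j',k'), \<phi> a} \<notin> E"
            using LT_C3[OF tp, of i' j' k' a] ab na npar \<open>fst a = fst b\<close> unfolding b by auto
          then show ?thesis unfolding b by (auto simp: insert_commute)
        qed
      qed
    qed
  qed
  then show ?thesis by simp
qed

end

lemma core:
  fixes V :: "'a set" and E :: "'a set set"
  assumes finV: "finite V"
    and simpE: "\<forall>e\<in>E. \<exists>x y. x\<in>V \<and> y\<in>V \<and> x\<noteq>y \<and> e={x,y}"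
    and Vdef: "V = S \<union> S' \<union> {v}"
    and disj: "S \<inter> S' = {}" and vS: "v \<notin> S" and vS': "v \<notin> S'"
    and indS: "\<forall>x\<in>S. \<forall>y\<in>S. {x,y} \<notin> E"
    and indS': "\<forall>x\<in>S'. \<forall>y\<in>S'. {x,y} \<notin> E"
    and compl: "\<forall>x\<in>S. \<forall>y\<in>S'. {x,y} \<in> E"
    and cS: "p \<le> card S" and cS': "p \<le> card S'"
    and p3: "3 \<le> p"
    and u1: "u1 \<in> S" "{v,u1} \<in> E"
    and u0: "u0 \<in> S" "{v,u0} \<notin> E"
    and u2: "{v,u2} \<in> E" "u2 \<noteq> u1"
  shows "(intersects_to (V, E) (X_graph p) \<or> intersects_to (V, E) (Y_graph p)) \<and>
         (\<forall>t::nat. p \<ge> 3 * t^2 + t + 1 \<longrightarrow> intersects_to (V, E) (tS_graph t))"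
proof (cases "\<exists>x\<in>S'. {v,x} \<in> E")
  case True
  then obtain w where w: "w \<in> S'" "{v,w} \<in> E" by blast
  have "w \<noteq> u1" using w u1 disj by auto
  then interpret HG V E S S' v p u0 u1 w
    using assms w by unfold_locales auto
  show ?thesis using LY w LT by auto
next
  case False
  interpret HG V E S S' v p u0 u1 u2
    using assms by unfold_locales auto
  have "u2 \<in> S" using u2SS False u2 by auto
  then show ?thesis using LX False LT by auto
qed

lemma card2_other: "2 \<le> card X \<Longrightarrow> \<exists>y\<in>X. y \<noteq> u"
proof (rule ccontr)
  assume a: "2 \<le> card X" "\<not> (\<exists>y\<in>X. y \<noteq> u)"
  then have "X \<subseteq> {u}" by auto
  then have "card X \<le> 1" using card_mono[of "{u}" X] by simp
  then show False using a by simp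
qed

theorem mainTheorem7:
  fixes V :: "'a set" and E :: "'a set set" and A B :: "'a set" and v :: 'a and p :: nat
  assumes "p \<ge> 3"
    and "simple_graph (V, E)"
    and "V = A \<union> B \<union> {v}"
    and "A \<inter> B = {}" and "v \<notin> A" and "v \<notin> B"
    and "\<forall>x\<in>A. \<forall>y\<in>A. {x, y} \<notin> E"
    and "\<forall>x\<in>B. \<forall>y\<in>B. {x, y} \<notin> E"
    and "\<forall>x\<in>A. \<forall>y\<in>B. {x, y} \<in> E"
    and "card A \<ge> p" and "card B \<ge> p"
    and "card {x \<in> A \<union> B. {v, x} \<in> E} \<ge> 2"
    and "((\<exists>x\<in>A. {v, x} \<in> E) \<and> (\<exists>x\<in>A. {v, x} \<notin> E)) \<or>
         ((\<exists>x\<in>B. {v, x} \<in> E) \<and> (\<exists>x\<in>B. {v, x} \<notin> E))"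
  shows "(intersects_to (V, E) (X_graph p) \<or> intersects_to (V, E) (Y_graph p)) \<and>
         (\<forall>t::nat. p \<ge> 3 * t^2 + t + 1 \<longrightarrow> intersects_to (V, E) (tS_graph t))"
proof -
  have finV: "finite V" and simpE: "\<forall>e\<in>E. \<exists>x y. x\<in>V \<and> y\<in>V \<and> x\<noteq>y \<and> e={x,y}"
    using assms(2) unfolding simple_graph_def by auto
  have compl': "\<forall>x\<in>B. \<forall>y\<in>A. {x,y} \<in> E" using assms(9) by (metis insert_commute)
  from assms(13) show ?thesis
  proof
    assume "(\<exists>x\<in>A. {v, x} \<in> E) \<and> (\<exists>x\<in>A. {v, x} \<notin> E)"
    then obtain u1 u0 where u: "u1 \<in> A" "{v,u1} \<in> E" "u0 \<in> A" "{v,u0} \<notin> E" by blast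
    obtain u2 where "u2 \<in> {x \<in> A \<union> B. {v, x} \<in> E}" "u2 \<noteq> u1" using card2_other[OF assms(12)] by blast
    then have u2: "{v,u2} \<in> E" "u2 \<noteq> u1" by auto
    show ?thesis
      by (rule core[OF finV simpE assms(3,4,5,6,7,8,9,10,11,1) u u2])
  next
    assume "(\<exists>x\<in>B. {v, x} \<in> E) \<and> (\<exists>x\<in>B. {v, x} \<notin> E)"
    then obtain u1 u0 where u: "u1 \<in> B" "{v,u1} \<in> E" "u0 \<in> B" "{v,u0} \<notin> E" by blast
    obtain u2 where "u2 \<in> {x \<in> A \<union> B. {v, x} \<in> E}" "u2 \<noteq> u1" using card2_other[OF assms(12)] by blast
    then have u2: "{v,u2} \<in> E" "u2 \<noteq> u1" by auto
    have V': "V = B \<union> A \<union> {v}" using assms(3) by auto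
    have d': "B \<inter> A = {}" using assms(4) by auto
    show ?thesis
      by (rule core[OF finV simpE V' d' assms(6,5,8,7) compl' assms(11,10,1) u u2])
  qed
qed

end
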